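(* If $G$ is a connected, claw-free, cubic graph, then \[ \sigma_{(2,3)}(G) \le \sigma_{(2,2)}(G) \le \sigma_{(2,3)}(G)+1. \] In addition, if $G\neq K_4$, then $u(G) \le \sigma_{(2,2)}(G) \le u(G)+1$, where $u(G)$ is the number of units of $G$.
   Context: A graph is claw-free if it has no induced subgraph isomorphic to $K_{1,3}$; it is cubic if every vertex has degree $3$. A diamond is an induced subgraph isomorphic to $K_4$ minus one edge. For a connected, claw-free, cubic graph $G\neq K_4$, the vertex set $V(G)$ can be uniquely partitioned into sets each of which induces a triangle or a diamond in $G$; the parts of this partition are called units, and $u(G)$ is the number of units. $(p,q)$-spreading: let $p\in\mathbb{N}$ and $q\in\mathbb{N}\cup\{\infty\}$. Start with a set $S\subseteq V(G)$ of blue vertices, all other vertices white. The color change rule: if a white vertex $w$ has at least $p$ blue neighbors, and at least one of the blue neighbors of $w$ has at most $q$ white neighbors, then $w$ is recolored blue. $S$ is a $(p,q)$-spreading set if repeatedly applying this rule eventually colors all vertices blue. $\sigma_{(p,q)}(G)$ is the minimum cardinality of a $(p,q)$-spreading set of $G$. *)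

theory Defs
  imports Main "HOL-Library.Extended_Nat"
begin

definition simple_graph :: "'a set \<Rightarrow> ('a \<Rightarrow> 'a \<Rightarrow> bool) \<Rightarrow> bool" where
  "simple_graph V E \<longleftrightarrow> finite V \<and> (\<forall>u v. E u v \<longrightarrow> u \<in> V \<and> v \<in> V)
     \<and> (\<forall>u v. E u v \<longrightarrow> E v u) \<and> (\<forall>v. \<not> E v v)"

definition nbrs :: "'a set \<Rightarrow> ('a \<Rightarrow> 'a \<Rightarrow> bool) \<Rightarrow> 'a \<Rightarrow> 'a set" where
  "nbrs V E v = {u \<in> V. E v u}"

definition connected_graph :: "'a set \<Rightarrow> ('a \<Rightarrow> 'a \<Rightarrow> bool) \<Rightarrow> bool" where
  "connected_graph V E \<longleftrightarrow> V \<noteq> {} \<and>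
     (\<forall>u\<in>V. \<forall>v\<in>V. (\<lambda>x y. x \<in> V \<and> y \<in> V \<and> E x y)\<^sup>*\<^sup>* u v)"

definition cubic :: "'a set \<Rightarrow> ('a \<Rightarrow> 'a \<Rightarrow> bool) \<Rightarrow> bool" where
  "cubic V E \<longleftrightarrow> (\<forall>v\<in>V. card (nbrs V E v) = 3)"

definition claw_free :: "'a set \<Rightarrow> ('a \<Rightarrow> 'a \<Rightarrow> bool) \<Rightarrow> bool" where
  "claw_free V E \<longleftrightarrow> \<not> (\<exists>v a b c. v \<in> V \<and> a \<in> V \<and> b \<in> V \<and> c \<in> V \<and>
      a \<noteq> b \<and> a \<noteq> c \<and> b \<noteq> c \<and> E v a \<and> E v b \<and> E v c \<and>
      \<not> E a b \<and> \<not> E a c \<and> \<not> E b c)"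

definition is_K4 :: "'a set \<Rightarrow> ('a \<Rightarrow> 'a \<Rightarrow> bool) \<Rightarrow> bool" where
  "is_K4 V E \<longleftrightarrow> card V = 4 \<and> (\<forall>u\<in>V. \<forall>v\<in>V. u \<noteq> v \<longrightarrow> E u v)"

definition induces_triangle :: "('a \<Rightarrow> 'a \<Rightarrow> bool) \<Rightarrow> 'a set \<Rightarrow> bool" where
  "induces_triangle E X \<longleftrightarrow> card X = 3 \<and> (\<forall>u\<in>X. \<forall>v\<in>X. u \<noteq> v \<longrightarrow> E u v)"

definition induces_diamond :: "('a \<Rightarrow> 'a \<Rightarrow> bool) \<Rightarrow> 'a set \<Rightarrow> bool" where
  "induces_diamond E X \<longleftrightarrow> card X = 4 \<and>
     (\<exists>a\<in>X. \<exists>b\<in>X. a \<noteq> b \<and> \<not> E a b \<and>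
        (\<forall>u\<in>X. \<forall>v\<in>X. u \<noteq> v \<and> {u, v} \<noteq> {a, b} \<longrightarrow> E u v))"

definition unit_partition :: "'a set \<Rightarrow> ('a \<Rightarrow> 'a \<Rightarrow> bool) \<Rightarrow> 'a set set \<Rightarrow> bool" where
  "unit_partition V E P \<longleftrightarrow> \<Union>P = V \<and> (\<forall>X\<in>P. \<forall>Y\<in>P. X \<noteq> Y \<longrightarrow> X \<inter> Y = {}) \<and>
     (\<forall>X\<in>P. induces_triangle E X \<or> induces_diamond E X)"

(* u(G): number of units of the (unique) unit partition *)
definition num_units :: "'a set \<Rightarrow> ('a \<Rightarrow> 'a \<Rightarrow> bool) \<Rightarrow> nat" where
  "num_units V E = card (THE P. unit_partition V E P)"

(* one application of the (p,q) colour change rule: blue set B becomes insert w B *)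
definition spread_step :: "'a set \<Rightarrow> ('a \<Rightarrow> 'a \<Rightarrow> bool) \<Rightarrow> nat \<Rightarrow> enat \<Rightarrow> 'a set \<Rightarrow> 'a set \<Rightarrow> bool" where
  "spread_step V E p q B B' \<longleftrightarrow> (\<exists>w. w \<in> V \<and> w \<notin> B \<and> B' = insert w B \<and>
     card (nbrs V E w \<inter> B) \<ge> p \<and>
     (\<exists>v \<in> nbrs V E w \<inter> B. enat (card (nbrs V E v - B)) \<le> q))"

definition spreading_set :: "'a set \<Rightarrow> ('a \<Rightarrow> 'a \<Rightarrow> bool) \<Rightarrow> nat \<Rightarrow> enat \<Rightarrow> 'a set \<Rightarrow> bool" where
  "spreading_set V E p q S \<longleftrightarrow> S \<subseteq> V \<and> (spread_step V E p q)\<^sup>*\<^sup>* S V"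

definition sigma :: "'a set \<Rightarrow> ('a \<Rightarrow> 'a \<Rightarrow> bool) \<Rightarrow> nat \<Rightarrow> enat \<Rightarrow> nat" where
  "sigma V E p q = (LEAST k. \<exists>S. spreading_set V E p q S \<and> card S = k)"

end

theory Submission
  imports Defs
begin


locale cg =
  fixes V :: "'a set" and E :: "'a \<Rightarrow> 'a \<Rightarrow> bool"
  assumes sg: "simple_graph V E" and cub: "cubic V E"
begin

lemma finV: "finite V" using sg unfolding simple_graph_def by blast
lemma EV: "E u v \<Longrightarrow> u \<in> V \<and> v \<in> V" using sg unfolding simple_graph_def by blast
lemma Esym: "E u v \<Longrightarrow> E v u" using sg unfolding simple_graph_def by blast
lemma Eirr[simp]: "\<not> E v v" using sg unfolding simple_graph_def by blast
lemma Ene: "E u v \<Longrightarrow> u \<noteq> v" using Eirr by metis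

lemma nbrs_iff[simp]: "u \<in> nbrs V E v \<longleftrightarrow> E v u" using EV unfolding nbrs_def by blast
lemma fin_nbrs[simp]: "finite (nbrs V E v)" using finV unfolding nbrs_def by simp
lemma card_nbrs: "v \<in> V \<Longrightarrow> card (nbrs V E v) = 3" using cub unfolding cubic_def by blast

lemma no4: assumes "E v a" "E v b" "E v c" "E v d" "a \<noteq> b" "a \<noteq> c" "a \<noteq> d" "b \<noteq> c" "b \<noteq> d" "c \<noteq> d"
  shows False
proof -
  have "{a,b,c,d} \<subseteq> nbrs V E v" using assms by auto
  hence "card {a,b,c,d} \<le> card (nbrs V E v)" by (intro card_mono) auto
  moreover have "card (nbrs V E v) = 3" using card_nbrs EV assms by blast
  moreover have "card {a,b,c,d} = 4" using assms by auto
  ultimately show False by simp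
qed

lemma nb3: assumes "E v a" "E v b" "E v c" "a \<noteq> b" "a \<noteq> c" "b \<noteq> c" "E v y"
  shows "y = a \<or> y = b \<or> y = c"
  using no4[of v a b c y] assms by blast

definition tri where "tri a b c \<longleftrightarrow> a \<noteq> b \<and> a \<noteq> c \<and> b \<noteq> c \<and> E a b \<and> E a c \<and> E b c"
definition dia where "dia a b m1 m2 \<longleftrightarrow> a \<noteq> b \<and> a \<noteq> m1 \<and> a \<noteq> m2 \<and> b \<noteq> m1 \<and> b \<noteq> m2 \<and> m1 \<noteq> m2
   \<and> \<not> E a b \<and> E a m1 \<and> E a m2 \<and> E b m1 \<and> E b m2 \<and> E m1 m2"

lemma tri_iff: "induces_triangle E X \<longleftrightarrow> (\<exists>a b c. X = {a,b,c} \<and> tri a b c)"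
proof
  assume "induces_triangle E X"
  then obtain a b c where "X = {a,b,c}" "a \<noteq> b" "b \<noteq> c" "a \<noteq> c" "\<forall>u\<in>X. \<forall>v\<in>X. u \<noteq> v \<longrightarrow> E u v"
    unfolding induces_triangle_def card_3_iff by blast
  thus "\<exists>a b c. X = {a,b,c} \<and> tri a b c" unfolding tri_def by blast
next
  assume "\<exists>a b c. X = {a,b,c} \<and> tri a b c"
  then obtain a b c where "X = {a,b,c}" "tri a b c" by blast
  thus "induces_triangle E X" unfolding induces_triangle_def tri_def using Esym by auto
qed

lemma dia_iff: "induces_diamond E X \<longleftrightarrow> (\<exists>a b m1 m2. X = {a,b,m1,m2} \<and> dia a b m1 m2)"
proof
  assume "induces_diamond E X"
  then obtain a b where ab: "card X = 4" "a \<in> X" "b \<in> X" "a \<noteq> b" "\<not> E a b"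
    "\<forall>u\<in>X. \<forall>v\<in>X. u \<noteq> v \<and> {u, v} \<noteq> {a, b} \<longrightarrow> E u v"
    unfolding induces_diamond_def by blast
  have "finite X" using ab(1) by (metis card.infinite zero_neq_numeral)
  hence "card (X - {a,b}) = 2" using ab by (simp add: card_Diff_subset)
  then obtain m1 m2 where m: "X - {a,b} = {m1,m2}" "m1 \<noteq> m2" unfolding card_2_iff by blast
  have X: "X = {a,b,m1,m2}" using m ab by blast
  have "dia a b m1 m2" unfolding dia_def using ab m X
    by (smt (verit, ccfv_threshold) Diff_iff doubleton_eq_iff insertCI)
  thus "\<exists>a b m1 m2. X = {a,b,m1,m2} \<and> dia a b m1 m2" using X by blast
next
  assume "\<exists>a b m1 m2. X = {a,b,m1,m2} \<and> dia a b m1 m2"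
  then obtain a b m1 m2 where X: "X = {a,b,m1,m2}" and d: "dia a b m1 m2" by blast
  have "card X = 4" using X d unfolding dia_def by auto
  moreover have "\<forall>u\<in>X. \<forall>v\<in>X. u \<noteq> v \<and> {u, v} \<noteq> {a, b} \<longrightarrow> E u v"
    using X d Esym unfolding dia_def by auto
  ultimately show "induces_diamond E X" unfolding induces_diamond_def using X d unfolding dia_def by blast
qed


lemma tri_sym: "tri a b c \<Longrightarrow> tri b a c" "tri a b c \<Longrightarrow> tri a c b"
  unfolding tri_def using Esym by blast+
lemma dia_sym: "dia a b m1 m2 \<Longrightarrow> dia b a m1 m2" "dia a b m1 m2 \<Longrightarrow> dia a b m2 m1"
  unfolding dia_def using Esym by blast+

lemma dia_mid: assumes "dia a b m1 m2" "E m1 y" shows "y = a \<or> y = b \<or> y = m2"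
  using assms nb3[of m1 a b m2 y] Esym unfolding dia_def by blast

lemma dia_tip: assumes "dia a b m1 m2" "E a y" "E a z" "y \<noteq> z" "y \<notin> {m1,m2}" "z \<notin> {m1,m2}" shows False
  using assms no4[of a m1 m2 y z] unfolding dia_def by blast

lemma dia_tri1: assumes d: "dia a b m1 m2" and t: "tri v y z" and v: "v \<in> {a,b,m1,m2}"
  shows "y \<in> {a,b,m1,m2}"
proof -
  have mid: "E m y \<Longrightarrow> y \<in> {a,b,m1,m2}" if "m \<in> {m1,m2}" for m y
    using that dia_mid[OF d] dia_mid[OF dia_sym(2)[OF d]] by blast
  have tipa: "E a y \<Longrightarrow> E a z \<Longrightarrow> y \<noteq> z \<Longrightarrow> y \<in> {m1,m2} \<or> z \<in> {m1,m2}" for y z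
    using dia_tip[OF d] by blast
  have tipb: "E b y \<Longrightarrow> E b z \<Longrightarrow> y \<noteq> z \<Longrightarrow> y \<in> {m1,m2} \<or> z \<in> {m1,m2}" for y z
    using dia_tip[OF dia_sym(1)[OF d]] by blast
  from t have tt: "E v y" "E v z" "E y z" "y \<noteq> z" unfolding tri_def by auto
  show ?thesis
  proof (cases "v \<in> {m1,m2}")
    case True thus ?thesis using mid tt by blast
  next
    case False
    hence "v = a \<or> v = b" using v by blast
    hence "y \<in> {m1,m2} \<or> z \<in> {m1,m2}" using tipa tipb tt by blast
    thus ?thesis using mid tt Esym by blast
  qed
qed

lemma dia_tri: assumes d: "dia a b m1 m2" and t: "tri v y z" and v: "v \<in> {a,b,m1,m2}"
  shows "{v,y,z} \<subseteq> {a,b,m1,m2}"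
  using dia_tri1[OF d t v] dia_tri1[OF d tri_sym(2)[OF t] v] v by blast

lemma path_exit: assumes "(\<lambda>x y. x \<in> V \<and> y \<in> V \<and> E x y)\<^sup>*\<^sup>* u v" "u \<in> A" "v \<notin> A"
  shows "\<exists>x y. x \<in> A \<and> y \<notin> A \<and> E x y"
  using assms by (induction rule: rtranclp_induct) blast+

end




locale ccg = cg +
  assumes conn: "connected_graph V E" and cf: "claw_free V E" and nk4: "\<not> is_K4 V E"
begin

lemma in_tri: assumes "v \<in> V" shows "\<exists>y z. tri v y z"
proof -
  obtain a b c where abc: "nbrs V E v = {a,b,c}" "a \<noteq> b" "b \<noteq> c" "a \<noteq> c"
    using card_nbrs[OF assms] unfolding card_3_iff by blast
  hence e: "E v a" "E v b" "E v c" by auto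
  have "a \<in> V" "b \<in> V" "c \<in> V" using e EV by blast+
  hence "E a b \<or> E a c \<or> E b c" using cf e abc assms
    unfolding claw_free_def by blast
  thus ?thesis
  proof (elim disjE)
    assume "E a b" thus ?thesis unfolding tri_def using abc e Ene by blast
  next
    assume "E a c" thus ?thesis unfolding tri_def using abc e Ene by blast
  next
    assume "E b c" thus ?thesis unfolding tri_def using abc e Ene by blast
  qed
qed


lemma noK4: assumes "tri a b c" "E a d" "E b d" "E c d" shows False
proof -
  have dd: "d \<noteq> a" "d \<noteq> b" "d \<noteq> c" using assms Ene by blast+
  have t: "a \<noteq> b" "a \<noteq> c" "b \<noteq> c" "E a b" "E a c" "E b c" using assms(1) unfolding tri_def by auto
  have adj: "E a b" "E a c" "E a d" "E b a" "E b c" "E b d" "E c a" "E c b" "E c d" "E d a" "E d b" "E d c"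
    using t assms Esym by blast+
  let ?K = "{a,b,c,d}"
  have cl: "y \<in> ?K" if "x \<in> ?K" "E x y" for x y
  proof -
    from that(1) consider "x = a" | "x = b" | "x = c" | "x = d" by blast
    thus ?thesis
    proof cases
      case 1 thus ?thesis using nb3[of a b c d y] adj dd t that(2) by auto
    next
      case 2 thus ?thesis using nb3[of b a c d y] adj dd t that(2) by auto
    next
      case 3 thus ?thesis using nb3[of c a b d y] adj dd t that(2) by auto
    next
      case 4 thus ?thesis using nb3[of d a b c y] adj dd t that(2) by auto
    qed
  qed
  have "V \<subseteq> ?K"
  proof
    fix y assume "y \<in> V"
    have "a \<in> V" using adj EV by blast
    hence "(\<lambda>x y. x \<in> V \<and> y \<in> V \<and> E x y)\<^sup>*\<^sup>* a y" using conn \<open>y \<in> V\<close> unfolding connected_graph_def by blast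
    thus "y \<in> ?K" using path_exit[of a y ?K] cl by blast
  qed
  moreover have "?K \<subseteq> V" using adj EV by blast
  ultimately have VK: "V = ?K" by blast
  have "card V = 4" using VK dd t by auto
  moreover have "\<forall>u\<in>V. \<forall>v\<in>V. u \<noteq> v \<longrightarrow> E u v" using VK adj by auto
  ultimately show False using nk4 unfolding is_K4_def by blast
qed


lemma two_tri_gen: assumes "tri v a b" "tri v a d" "b \<noteq> d"
  shows "\<exists>X. induces_diamond E X \<and> {v,a,b,d} \<subseteq> X"
proof -
  have t: "v \<noteq> a" "v \<noteq> b" "a \<noteq> b" "E v a" "E v b" "E a b" "v \<noteq> d" "a \<noteq> d" "E v d" "E a d"
    using assms unfolding tri_def by auto
  have "\<not> E b d" using noK4[of v a b d] assms(1) t(9,10) by blast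
  moreover have "E b v" "E b a" "E d v" "E d a" using t Esym by blast+
  ultimately have "dia b d v a" using t assms(3) unfolding dia_def by blast
  hence "induces_diamond E {b,d,v,a}" unfolding dia_iff by blast
  thus ?thesis by blast
qed

lemma two_tri: assumes "tri v a b" "tri v c d" "{a,b} \<noteq> {c,d}"
  shows "\<exists>X. induces_diamond E X \<and> {v,a,b} \<subseteq> X"
proof -
  have t: "v \<noteq> a" "v \<noteq> b" "a \<noteq> b" "E v a" "E v b" "v \<noteq> c" "v \<noteq> d" "c \<noteq> d" "E v c" "E v d"
    using assms unfolding tri_def by auto
  have "a = c \<or> a = d \<or> b = c \<or> b = d" using no4[of v a b c d] t by blast
  thus ?thesis
  proof (elim disjE)
    assume "a = c" thus ?thesis using two_tri_gen[of v a b d] assms by (metis insert_subset)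
  next
    assume "a = d" thus ?thesis using two_tri_gen[of v a b c] assms tri_sym(2)[OF assms(2)] by (metis insert_commute insert_subset)
  next
    assume "b = c" thus ?thesis using two_tri_gen[of v b a d] assms tri_sym(2)[OF assms(1)] by (metis insert_commute insert_subset)
  next
    assume "b = d" thus ?thesis using two_tri_gen[of v b a c] assms tri_sym(2)[OF assms(1)] tri_sym(2)[OF assms(2)] by (metis insert_commute insert_subset)
  qed
qed


lemma tri_at: assumes "induces_triangle E X" "v \<in> X" shows "\<exists>y z. X = {v,y,z} \<and> tri v y z"
proof -
  obtain a b c where X: "X = {a,b,c}" "tri a b c" using assms(1) unfolding tri_iff by blast
  have "v = a \<or> v = b \<or> v = c" using X assms(2) by blast
  thus ?thesis
  proof (elim disjE)
    assume "v = a" thus ?thesis using X by blast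
  next
    assume "v = b" thus ?thesis using X tri_sym(1)[OF X(2)] by (metis insert_commute)
  next
    assume "v = c" thus ?thesis using X tri_sym(1)[OF tri_sym(2)[OF X(2)]] by (metis insert_commute)
  qed
qed

lemma TT: assumes "induces_triangle E X" "induces_triangle E Y" "X \<noteq> Y" "v \<in> X" "v \<in> Y"
  shows "\<exists>D. induces_diamond E D \<and> X \<subseteq> D"
proof -
  obtain a b where a: "X = {v,a,b}" "tri v a b" using tri_at assms by blast
  obtain c d where c: "Y = {v,c,d}" "tri v c d" using tri_at assms by blast
  have "{a,b} \<noteq> {c,d}" using a c assms(3) by (metis insert_commute)
  thus ?thesis using two_tri[OF a(2) c(2)] a by blast
qed

lemma DT: assumes "induces_diamond E D" "induces_triangle E X" "v \<in> X" "v \<in> D"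
  shows "X \<subseteq> D"
proof -
  obtain a b where a: "X = {v,a,b}" "tri v a b" using tri_at assms by blast
  obtain p q m1 m2 where D: "D = {p,q,m1,m2}" "dia p q m1 m2" using assms(1) unfolding dia_iff by blast
  show ?thesis using dia_tri[OF D(2) a(2)] a D assms(4) by blast
qed

lemma DD: assumes "induces_diamond E D" "induces_diamond E D'" "v \<in> D" "v \<in> D'"
  shows "D = D'"
proof -
  have sub: "D \<subseteq> D'" if h: "induces_diamond E D" "induces_diamond E D'" "v \<in> D" "v \<in> D'" for D D'
  proof -
    obtain a b m1 m2 where D: "D = {a,b,m1,m2}" "dia a b m1 m2" using h(1) unfolding dia_iff by blast
    have t1: "induces_triangle E {a,m1,m2}" "induces_triangle E {b,m1,m2}"
      using D(2) unfolding tri_iff tri_def dia_def by blast+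
    show ?thesis
    proof (cases "v = b")
      case False
      hence "v \<in> {a,m1,m2}" using D h(3) by blast
      hence "{a,m1,m2} \<subseteq> D'" using DT[OF h(2) t1(1) _ h(4)] by blast
      moreover hence "{b,m1,m2} \<subseteq> D'" using DT[OF h(2) t1(2), of m1] by blast
      ultimately show ?thesis using D by blast
    next
      case True
      hence "{b,m1,m2} \<subseteq> D'" using DT[OF h(2) t1(2) _ h(4)] by blast
      moreover hence "{a,m1,m2} \<subseteq> D'" using DT[OF h(2) t1(1), of m1] by blast
      ultimately show ?thesis using D by blast
    qed
  qed
  have "D \<subseteq> D'" using sub assms by blast
  moreover have "card D = card D'" using assms(1,2) unfolding induces_diamond_def by simp
  moreover have "finite D'" using assms(2) unfolding induces_diamond_def by (metis card.infinite zero_neq_numeral)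
  ultimately show ?thesis using card_subset_eq by blast
qed

definition Pc where "Pc = {X. induces_diamond E X} \<union> {X. induces_triangle E X \<and> \<not>(\<exists>Y. induces_diamond E Y \<and> X \<subseteq> Y)}"

lemma tri_V: "induces_triangle E X \<Longrightarrow> X \<subseteq> V"
  unfolding tri_iff tri_def using EV by blast
lemma dia_V: "induces_diamond E X \<Longrightarrow> X \<subseteq> V"
  unfolding dia_iff dia_def using EV by blast

lemma Pc_part: "unit_partition V E Pc"
proof -
  have "\<Union>Pc \<subseteq> V" unfolding Pc_def using tri_V dia_V by blast
  moreover have "V \<subseteq> \<Union>Pc"
  proof
    fix v assume "v \<in> V"
    then obtain y z where t: "tri v y z" using in_tri by blast
    hence T: "induces_triangle E {v,y,z}" unfolding tri_iff by blast
    show "v \<in> \<Union>Pc"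
    proof (cases "\<exists>Y. induces_diamond E Y \<and> {v,y,z} \<subseteq> Y")
      case True thus ?thesis unfolding Pc_def by blast
    next
      case False thus ?thesis using T unfolding Pc_def by blast
    qed
  qed
  moreover have "\<forall>X\<in>Pc. \<forall>Y\<in>Pc. X \<noteq> Y \<longrightarrow> X \<inter> Y = {}"
  proof (intro ballI impI)
    fix X Y assume XY: "X \<in> Pc" "Y \<in> Pc" "X \<noteq> Y"
    show "X \<inter> Y = {}"
    proof (rule ccontr)
      assume "X \<inter> Y \<noteq> {}"
      then obtain v where v: "v \<in> X" "v \<in> Y" by blast
      show False using XY v DD DT TT unfolding Pc_def by blast
    qed
  qed
  moreover have "\<forall>X\<in>Pc. induces_triangle E X \<or> induces_diamond E X" unfolding Pc_def by blast
  ultimately show ?thesis unfolding unit_partition_def by blast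
qed


lemma two_in: assumes P: "unit_partition V E P" and X: "X \<in> P" and w: "w \<in> X"
  shows "\<exists>y z. y \<noteq> z \<and> y \<in> X \<and> z \<in> X \<and> E w y \<and> E w z"
proof -
  have "induces_triangle E X \<or> induces_diamond E X" using P X unfolding unit_partition_def by blast
  thus ?thesis
  proof
    assume "induces_triangle E X"
    then obtain y z where "X = {w,y,z}" "tri w y z" using tri_at w by blast
    thus ?thesis unfolding tri_def by blast
  next
    assume "induces_diamond E X"
    then obtain a b m1 m2 where D: "X = {a,b,m1,m2}" "dia a b m1 m2" unfolding dia_iff by blast
    have "E m1 a" "E m1 b" "E m2 a" "E m2 b" using D(2) Esym unfolding dia_def by blast+
    thus ?thesis using D w unfolding dia_def by blast
  qed
qed

lemma out1: assumes P: "unit_partition V E P" and X: "X \<in> P" and w: "w \<in> X"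
  and "E w y" "E w z" "y \<notin> X" "z \<notin> X" shows "y = z"
  using two_in[OF P X w] no4[of w _ _ y z] assms by blast

lemma lemA0: assumes P: "unit_partition V E P" and X: "X \<in> P" and t: "tri t t2 t3" "t \<in> X" "t2 \<in> X"
  shows "t3 \<in> X"
proof (rule ccontr)
  assume n: "t3 \<notin> X"
  have "t3 \<in> V" using t EV unfolding tri_def by blast
  then obtain Z where Z: "Z \<in> P" "t3 \<in> Z" using P unfolding unit_partition_def by blast
  have "Z \<noteq> X" using Z n by blast
  hence dis: "Z \<inter> X = {}" using P Z X unfolding unit_partition_def by blast
  obtain y z where yz: "y \<noteq> z" "y \<in> Z" "z \<in> Z" "E t3 y" "E t3 z" using two_in[OF P Z(1) Z(2)] by blast
  have "E t3 t" "E t3 t2" "t \<noteq> t2" using t Esym unfolding tri_def by blast+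
  moreover have "y \<noteq> t" "y \<noteq> t2" "z \<noteq> t" "z \<noteq> t2" using dis yz t by blast+
  ultimately show False using no4[of t3 t t2 y z] yz by blast
qed

lemma lemA: assumes P: "unit_partition V E P" and X: "X \<in> P" and t: "tri t t2 t3" "t \<in> X"
  shows "t2 \<in> X \<and> t3 \<in> X"
proof -
  have "t2 \<noteq> t3" "E t t2" "E t t3" using t unfolding tri_def by blast+
  hence "t2 \<in> X \<or> t3 \<in> X" using out1[OF P X t(2)] by blast
  thus ?thesis
  proof
    assume "t2 \<in> X" thus ?thesis using lemA0[OF P X t] by blast
  next
    assume "t3 \<in> X" thus ?thesis using lemA0[OF P X tri_sym(2)[OF t(1)] t(2)] by blast
  qed
qed

lemma uniq_sub: assumes P: "unit_partition V E P" and P': "unit_partition V E P'"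
  and X: "X \<in> P" and Y: "Y \<in> P'" and v: "v \<in> X" "v \<in> Y" shows "X \<subseteq> Y"
proof -
  have "induces_triangle E X \<or> induces_diamond E X" using P X unfolding unit_partition_def by blast
  thus ?thesis
  proof
    assume "induces_triangle E X"
    then obtain y z where "X = {v,y,z}" "tri v y z" using tri_at v by blast
    thus ?thesis using lemA[OF P' Y, of v y z] v by blast
  next
    assume "induces_diamond E X"
    then obtain a b m1 m2 where D: "X = {a,b,m1,m2}" "dia a b m1 m2" unfolding dia_iff by blast
    have t1: "tri a m1 m2" "tri b m1 m2" using D(2) unfolding tri_def dia_def by blast+
    have t1': "tri m1 a m2" "tri m2 a m1" "tri m1 b m2" "tri m2 b m1"
      using t1 tri_sym by blast+
    have "m1 \<in> Y"
    proof -
      consider "v = a" | "v = b" | "v = m1" | "v = m2" using D v by blast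
      thus ?thesis
      proof cases
        case 1 thus ?thesis using lemA[OF P' Y t1(1)] v by blast
      next
        case 2 thus ?thesis using lemA[OF P' Y t1(2)] v by blast
      next
        case 3 thus ?thesis using v by blast
      next
        case 4 thus ?thesis using lemA[OF P' Y t1'(2)] v by blast
      qed
    qed
    thus ?thesis using lemA[OF P' Y t1'(1)] lemA[OF P' Y t1'(3)] D by blast
  qed
qed

lemma uniq: assumes P: "unit_partition V E P" and P': "unit_partition V E P'" shows "P = P'"
proof -
  have sub: "P \<subseteq> P'" if P: "unit_partition V E P" and P': "unit_partition V E P'" for P P'
  proof
    fix X assume X: "X \<in> P"
    have "X \<noteq> {}" using P X unfolding unit_partition_def induces_triangle_def induces_diamond_def by fastforce
    then obtain v where v: "v \<in> X" by blast
    hence "v \<in> V" using P X unfolding unit_partition_def by blast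
    then obtain Y where Y: "Y \<in> P'" "v \<in> Y" using P' unfolding unit_partition_def by blast
    have "X = Y" using uniq_sub[OF P P' X Y(1) v Y(2)] uniq_sub[OF P' P Y(1) X Y(2) v] by blast
    thus "X \<in> P'" using Y by blast
  qed
  show ?thesis using sub[OF P P'] sub[OF P' P] by blast
qed

lemma num_units_eq: "num_units V E = card Pc"
  unfolding num_units_def using uniq Pc_part by (metis the_equality)

end



context cg begin

lemma up_cover: "unit_partition V E P \<Longrightarrow> \<Union>P = V" unfolding unit_partition_def by blast
lemma up_disj: "unit_partition V E P \<Longrightarrow> X \<in> P \<Longrightarrow> Y \<in> P \<Longrightarrow> X \<noteq> Y \<Longrightarrow> X \<inter> Y = {}"
  unfolding unit_partition_def by blast
lemma up_kind: "unit_partition V E P \<Longrightarrow> X \<in> P \<Longrightarrow> induces_triangle E X \<or> induces_diamond E X"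
  unfolding unit_partition_def by blast

lemma up_ne: "unit_partition V E P \<Longrightarrow> X \<in> P \<Longrightarrow> X \<noteq> {}"
  using up_kind unfolding tri_iff dia_iff by blast

abbreviation "rch p q \<equiv> (spread_step V E p q)\<^sup>*\<^sup>*"

lemma rch_incr: "rch p q S B \<Longrightarrow> S \<subseteq> B"
  by (induction rule: rtranclp_induct) (auto simp: spread_step_def)

lemma rch_V: "rch p q S B \<Longrightarrow> S \<subseteq> V \<Longrightarrow> B \<subseteq> V"
  by (induction rule: rtranclp_induct) (auto simp: spread_step_def)

lemma rch_mono: assumes "rch p q B C" "B \<subseteq> B'" shows "\<exists>C'. rch p q B' C' \<and> C \<subseteq> C'"
  using assms
proof (induction rule: rtranclp_induct)
  case base thus ?case by blast
next
  case (step C D)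
  then obtain C' where C': "rch p q B' C'" "C \<subseteq> C'" by blast
  from step(2) obtain w where w: "w \<in> V" "w \<notin> C" "D = insert w C" "card (nbrs V E w \<inter> C) \<ge> p"
    and v: "\<exists>v \<in> nbrs V E w \<inter> C. enat (card (nbrs V E v - C)) \<le> q" unfolding spread_step_def by blast
  show ?case
  proof (cases "w \<in> C'")
    case True thus ?thesis using C' w by blast
  next
    case False
    have c1: "card (nbrs V E w \<inter> C) \<le> card (nbrs V E w \<inter> C')" using C' by (intro card_mono) auto
    obtain v where v1: "v \<in> nbrs V E w \<inter> C" and v2: "enat (card (nbrs V E v - C)) \<le> q" using v by blast
    have "card (nbrs V E v - C') \<le> card (nbrs V E v - C)" using C' by (intro card_mono) auto
    hence "enat (card (nbrs V E v - C')) \<le> enat (card (nbrs V E v - C))" by simp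
    hence a3: "enat (card (nbrs V E v - C')) \<le> q" using v2 by (rule order_trans)
    have a1: "p \<le> card (nbrs V E w \<inter> C')" using c1 w(4) by linarith
    have a2: "v \<in> nbrs V E w \<inter> C'" using v1 C'(2) by blast
    note a = a1 a2 a3
    have "spread_step V E p q C' (insert w C')" unfolding spread_step_def
      using w(1) False a by blast
    thus ?thesis using C' w by (meson insert_mono rtranclp.rtrancl_into_rtrancl)
  qed
qed

lemma add: assumes "w \<in> V" "u1 \<in> B" "u2 \<in> B" "u1 \<noteq> u2" "E w u1" "E w u2" "y \<in> B" "E u1 y"
  shows "rch 2 2 B (insert w B)"
proof (cases "w \<in> B")
  case True thus ?thesis by (simp add: insert_absorb)
next
  case False
  have "{u1,u2} \<subseteq> nbrs V E w \<inter> B" using assms by auto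
  hence "card {u1,u2} \<le> card (nbrs V E w \<inter> B)" by (intro card_mono) auto
  hence c2: "2 \<le> card (nbrs V E w \<inter> B)" using assms by simp
  have "nbrs V E u1 - B \<subseteq> nbrs V E u1 - {y}" using assms by auto
  hence "card (nbrs V E u1 - B) \<le> card (nbrs V E u1 - {y})" by (intro card_mono) auto
  also have "\<dots> = 2" using card_nbrs[of u1] assms EV by (simp add: card_Diff_singleton)
  finally have "enat (card (nbrs V E u1 - B)) \<le> 2" by (simp add: numeral_eq_enat)
  moreover have "u1 \<in> nbrs V E w \<inter> B" using assms by simp
  ultimately have "spread_step V E 2 2 B (insert w B)" unfolding spread_step_def
    using assms(1) False c2 by blast
  thus ?thesis by blast
qed

lemma q_mono: "rch 2 2 S B \<Longrightarrow> rch 2 3 S B"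
proof (induction rule: rtranclp_induct)
  case base thus ?case by blast
next
  case (step y z)
  have 23: "(2::enat) \<le> 3" by (simp add: numeral_eq_enat)
  have "spread_step V E 2 3 y z" using step(2) order_trans[OF _ 23] unfolding spread_step_def
    by blast
  thus ?case using step(3) by simp
qed

end
context ccg begin
lemma lower: assumes P: "unit_partition V E P" and S: "spreading_set V E 2 q S"
  shows "card P \<le> card S"
proof -
  have hit: "X \<inter> S \<noteq> {}" if X: "X \<in> P" for X
  proof
    assume XS: "X \<inter> S = {}"
    have "rch 2 q S B \<Longrightarrow> X \<inter> B = {}" for B
    proof (induction rule: rtranclp_induct)
      case base thus ?case using XS .
    next
      case (step B C)
      from step(2) obtain w where w: "w \<in> V" "w \<notin> B" "C = insert w B" "card (nbrs V E w \<inter> B) \<ge> 2"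
        unfolding spread_step_def by blast
      show ?case
      proof (rule ccontr)
        assume "X \<inter> C \<noteq> {}"
        hence wX: "w \<in> X" using step(3) w by blast
        have "\<exists>a b. a \<noteq> b \<and> a \<in> nbrs V E w \<inter> B \<and> b \<in> nbrs V E w \<inter> B"
        proof (rule ccontr)
          assume "\<not> (\<exists>a b. a \<noteq> b \<and> a \<in> nbrs V E w \<inter> B \<and> b \<in> nbrs V E w \<inter> B)"
          hence "\<forall>a\<in>nbrs V E w \<inter> B. \<forall>b\<in>nbrs V E w \<inter> B. a = b" by blast
          hence "card (nbrs V E w \<inter> B) \<le> Suc 0" using card_le_Suc0_iff_eq[of "nbrs V E w \<inter> B"] by simp
          thus False using w(4) by simp
        qed
        then obtain a b where ab: "a \<noteq> b" "a \<in> nbrs V E w \<inter> B" "b \<in> nbrs V E w \<inter> B" by blast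
        have "a \<notin> X" "b \<notin> X" using ab step(3) by blast+
        thus False using out1[OF P X wX, of a b] ab by auto
      qed
    qed
    moreover have "rch 2 q S V" using S unfolding spreading_set_def by blast
    ultimately have "X \<inter> V = {}" by blast
    moreover have "X \<subseteq> V" using up_cover[OF P] X by blast
    moreover have "X \<noteq> {}" using up_ne[OF P X] .
    ultimately show False by blast
  qed
  have "\<forall>X\<in>P. \<exists>s. s \<in> X \<inter> S" using hit by blast
  from bchoice[OF this] obtain f where fX0: "\<forall>X\<in>P. f X \<in> X \<inter> S" by blast
  have fX: "f X \<in> X \<inter> S" if "X \<in> P" for X using fX0 that by blast
  have "inj_on f P"
  proof (rule inj_onI)
    fix X Y assume XY: "X \<in> P" "Y \<in> P" "f X = f Y"
    have "f X \<in> X" using fX[OF XY(1)] by blast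
    moreover have "f X \<in> Y" using fX[OF XY(2)] XY(3) by simp
    ultimately show "X = Y" using up_disj[OF P XY(1,2)] by blast
  qed
  moreover have "f ` P \<subseteq> S"
  proof
    fix s assume "s \<in> f ` P"
    then obtain X where "X \<in> P" "s = f X" by blast
    thus "s \<in> S" using fX[of X] by blast
  qed
  moreover have "S \<subseteq> V" using S unfolding spreading_set_def by blast
  hence "finite S" using finV by (rule finite_subset)
  ultimately show ?thesis by (rule card_inj_on_le)
qed

end
context cg begin
lemma sigma_ex: "\<exists>S. spreading_set V E p q S \<and> card S = sigma V E p q"
proof -
  have "spreading_set V E p q V" unfolding spreading_set_def by blast
  hence "\<exists>k. \<exists>S. spreading_set V E p q S \<and> card S = k" by blast
  from LeastI_ex[OF this] show ?thesis unfolding sigma_def .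
qed

lemma sigma_le: "spreading_set V E p q S \<Longrightarrow> sigma V E p q \<le> card S"
  unfolding sigma_def by (rule Least_le) blast

lemma sigma_ge: assumes "\<And>S. spreading_set V E p q S \<Longrightarrow> k \<le> card S" shows "k \<le> sigma V E p q"
  using sigma_ex assms by metis

lemma sigma_mono: "sigma V E 2 3 \<le> sigma V E 2 2"
proof -
  obtain S where S: "spreading_set V E 2 2 S" "card S = sigma V E 2 2"
    using sigma_ex by blast
  hence "spreading_set V E 2 3 S" unfolding spreading_set_def using q_mono by blast
  thus ?thesis using sigma_le S by metis
qed

end



context ccg begin

lemma rch_add: "rch 2 2 S B \<Longrightarrow> rch 2 2 B B' \<Longrightarrow> rch 2 2 S B'" by (rule rtranclp_trans)

lemma tri_entry: assumes t: "tri w s z" and x: "E x w" "x \<noteq> s" "x \<in> B" "s \<in> B" "y \<in> B" "E x y"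
  shows "\<exists>B'. rch 2 2 B B' \<and> B \<union> {w,s,z} \<subseteq> B'"
proof -
  have t0: "w \<noteq> s" "E w s" "E w z" "E s z" using t unfolding tri_def by auto
  have tt: "w \<noteq> s" "E w s" "E z w" "E z s" "E w x" "w \<in> V" "z \<in> V"
    using t0 Esym[OF t0(3)] Esym[OF t0(4)] Esym[OF x(1)] EV[OF x(1)] EV[OF t0(3)] by auto
  have r1: "rch 2 2 B (insert w B)" by (rule add[OF tt(6) x(3) x(4) x(2) tt(5) tt(2) x(5) x(6)])
  have r2: "rch 2 2 (insert w B) (insert z (insert w B))"
    by (rule add[of z w "insert w B" s s]) (use x tt in auto)
  show ?thesis by (rule exI[of _ "insert z (insert w B)"], rule conjI[OF rch_add[OF r1 r2]]) (use x(4) in auto)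
qed


lemma dia_entry: assumes d: "dia w t s m" and x: "E x w" "x \<noteq> s" "x \<in> B" "s \<in> B" "y \<in> B" "E x y"
  shows "\<exists>B'. rch 2 2 B B' \<and> B \<union> {w,t,s,m} \<subseteq> B'"
proof -
  have d0: "w \<noteq> s" "E w s" "E w m" "E t s" "E t m" "E s m" "s \<noteq> m" using d unfolding dia_def by auto
  have dd: "E m w" "E m s" "E w x" "w \<in> V" "m \<in> V" "t \<in> V" "E s w"
    using Esym[OF d0(3)] Esym[OF d0(6)] Esym[OF x(1)] Esym[OF d0(2)] EV[OF x(1)] EV[OF d0(3)] EV[OF d0(4)] by auto
  have r1: "rch 2 2 B (insert w B)" by (rule add[of w x B s y]) (use x d0 dd in auto)
  have r2: "rch 2 2 (insert w B) (insert m (insert w B))"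
    by (rule add[of m w "insert w B" s s]) (use x d0 dd in auto)
  have r3: "rch 2 2 (insert m (insert w B)) (insert t (insert m (insert w B)))"
    by (rule add[of t s "insert m (insert w B)" m w]) (use x d0 dd in auto)
  show ?thesis by (rule exI[of _ "insert t (insert m (insert w B))"], rule conjI[OF rch_add[OF rch_add[OF r1 r2] r3]])
    (use x(4) in auto)
qed

lemma entry: assumes P: "unit_partition V E P" and C: "C \<in> P" "w \<in> C" and x: "E x w" "x \<notin> C"
  shows "\<exists>s\<in>C. \<forall>B y. x \<in> B \<longrightarrow> s \<in> B \<longrightarrow> y \<in> B \<longrightarrow> E x y \<longrightarrow> (\<exists>B'. rch 2 2 B B' \<and> B \<union> C \<subseteq> B')"
proof -
  have "induces_triangle E C \<or> induces_diamond E C" using up_kind[OF P C(1)] .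
  thus ?thesis
  proof
    assume "induces_triangle E C"
    then obtain s z where Cs: "C = {w,s,z}" "tri w s z" using tri_at C(2) by blast
    have xs: "x \<noteq> s" using x Cs by blast
    have "\<forall>B y. x \<in> B \<longrightarrow> s \<in> B \<longrightarrow> y \<in> B \<longrightarrow> E x y \<longrightarrow> (\<exists>B'. rch 2 2 B B' \<and> B \<union> C \<subseteq> B')"
    proof (intro allI impI)
      fix B y assume h: "x \<in> B" "s \<in> B" "y \<in> B" "E x y"
      show "\<exists>B'. rch 2 2 B B' \<and> B \<union> C \<subseteq> B'" using tri_entry[OF Cs(2) x(1) xs h] unfolding Cs(1) .
    qed
    moreover have "s \<in> C" using Cs by blast
    ultimately show ?thesis by blast
  next
    assume "induces_diamond E C"
    then obtain a b m1 m2 where D: "C = {a,b,m1,m2}" "dia a b m1 m2" unfolding dia_iff by blast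
    have xw: "E w x" using x Esym by blast
    have "w \<noteq> m1" using dia_mid[OF D(2), of x] xw x D by blast
    moreover have "w \<noteq> m2" using dia_mid[OF dia_sym(2)[OF D(2)], of x] xw x D by blast
    ultimately have ab: "w = a \<or> w = b" using C D by blast
    have xm: "x \<noteq> m1" using x D by blast
    have D2: "dia w (if w = a then b else a) m1 m2" "C = {w, (if w = a then b else a), m1, m2}"
      using ab D dia_sym(1)[OF D(2)] by (auto simp: insert_commute)
    have "\<forall>B y. x \<in> B \<longrightarrow> m1 \<in> B \<longrightarrow> y \<in> B \<longrightarrow> E x y \<longrightarrow> (\<exists>B'. rch 2 2 B B' \<and> B \<union> C \<subseteq> B')"
    proof (intro allI impI)
      fix B y assume h: "x \<in> B" "m1 \<in> B" "y \<in> B" "E x y"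
      show "\<exists>B'. rch 2 2 B B' \<and> B \<union> C \<subseteq> B'" using dia_entry[OF D2(1) x(1) xm h] unfolding D2(2) .
    qed
    moreover have "m1 \<in> C" using D by blast
    ultimately show ?thesis by blast
  qed
qed

lemma base_unit: assumes P: "unit_partition V E P" and C: "C \<in> P"
  shows "\<exists>S B. S \<subseteq> C \<and> card S \<le> 2 \<and> rch 2 2 S B \<and> C \<subseteq> B"
proof -
  have "induces_triangle E C \<or> induces_diamond E C" using up_kind[OF P C(1)] .
  thus ?thesis
  proof
    assume "induces_triangle E C"
    then obtain a b c where Cs: "C = {a,b,c}" "tri a b c" unfolding tri_iff by blast
    have t0: "E a b" "E a c" "E b c" "a \<noteq> b" using Cs unfolding tri_def by auto
    have tt: "E c a" "E c b" "c \<in> V" using Esym[OF t0(2)] Esym[OF t0(3)] EV[OF t0(2)] by auto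
    have r: "rch 2 2 {a,b} (insert c {a,b})" by (rule add[of c a "{a,b}" b b]) (use t0 tt in auto)
    have "card {a,b} \<le> 2" by (simp add: card_insert_le_m1)
    moreover have "{a,b} \<subseteq> C" "C \<subseteq> insert c {a,b}" using Cs by auto
    ultimately show ?thesis using r by blast
  next
    assume "induces_diamond E C"
    then obtain a b m1 m2 where D: "C = {a,b,m1,m2}" "dia a b m1 m2" unfolding dia_iff by blast
    have d0: "E a m1" "E a m2" "E b m1" "E b m2" "E m1 m2" "m1 \<noteq> m2" using D unfolding dia_def by auto
    have dd: "a \<in> V" "b \<in> V" using EV[OF d0(1)] EV[OF d0(3)] by auto
    have r1: "rch 2 2 {m1,m2} (insert a {m1,m2})" by (rule add[of a m1 "{m1,m2}" m2 m2]) (use d0 dd in auto)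
    have r2: "rch 2 2 (insert a {m1,m2}) (insert b (insert a {m1,m2}))"
      by (rule add[of b m1 "insert a {m1,m2}" m2 m2]) (use d0 dd in auto)
    have r: "rch 2 2 {m1,m2} (insert b (insert a {m1,m2}))" using rch_add[OF r1 r2] .
    have "card {m1,m2} \<le> 2" by (simp add: card_insert_le_m1)
    moreover have "{m1,m2} \<subseteq> C" "C \<subseteq> insert b (insert a {m1,m2})" using D by auto
    ultimately show ?thesis using r by blast
  qed
qed


lemma up_fin: assumes P: "unit_partition V E P" shows "finite P"
proof -
  have "P \<subseteq> Pow V" using up_cover[OF P] by blast
  thus ?thesis using finV by (meson finite_Pow_iff finite_subset)
qed

lemma grow: assumes P: "unit_partition V E P"
  shows "1 \<le> k \<Longrightarrow> k \<le> card P \<Longrightarrow> \<exists>Q S B. Q \<subseteq> P \<and> card Q = k \<and> S \<subseteq> V \<and> card S \<le> k+1 \<and> rch 2 2 S B \<and> \<Union>Q \<subseteq> B"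
proof (induction k rule: nat_induct_at_least)
  case base
  hence "P \<noteq> {}" by auto
  then obtain C where C: "C \<in> P" by blast
  obtain S B where SB: "S \<subseteq> C" "card S \<le> 2" "rch 2 2 S B" "C \<subseteq> B" using base_unit[OF P C] by blast
  have "C \<subseteq> V" using up_cover[OF P] C by blast
  hence "{C} \<subseteq> P \<and> card {C} = 1 \<and> S \<subseteq> V \<and> card S \<le> 1+1 \<and> rch 2 2 S B \<and> \<Union>{C} \<subseteq> B"
    using C SB by auto
  thus ?case by (intro exI[of _ "{C}"] exI[of _ S] exI[of _ B])
next
  case (Suc k)
  have "k \<le> card P" using Suc.prems by simp
  from Suc.IH[OF this] obtain Q S B where IH: "Q \<subseteq> P" "card Q = k" "S \<subseteq> V" "card S \<le> k+1"
    "rch 2 2 S B" "\<Union>Q \<subseteq> B" by (elim exE conjE) (rule that, assumption+)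
  have finP: "finite P" using up_fin[OF P] .
  have finQ: "finite Q" using finite_subset[OF IH(1) finP] .
  have "Q \<noteq> P" using IH(2) Suc.prems by auto
  then obtain C0 where C0: "C0 \<in> P" "C0 \<notin> Q" using IH(1) by blast
  have "Q \<noteq> {}" using IH(2) Suc.hyps by auto
  then obtain X0 where X0: "X0 \<in> Q" by blast
  obtain a where a: "a \<in> X0" using up_ne[OF P] X0 IH(1) by blast
  obtain b where b: "b \<in> C0" using up_ne[OF P C0(1)] by blast
  have bQ: "b \<notin> \<Union>Q"
  proof
    assume "b \<in> \<Union>Q"
    then obtain X where "X \<in> Q" "b \<in> X" by blast
    moreover hence "X \<noteq> C0" using C0 by blast
    ultimately show False using up_disj[OF P, of X C0] IH(1) C0 b by blast
  qed
  have aV: "a \<in> V" "b \<in> V" using up_cover[OF P] a X0 IH(1) b C0 by blast+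
  hence "(\<lambda>x y. x \<in> V \<and> y \<in> V \<and> E x y)\<^sup>*\<^sup>* a b" using conn unfolding connected_graph_def by blast
  then obtain x w where xw: "x \<in> \<Union>Q" "w \<notin> \<Union>Q" "E x w" using path_exit[of a b "\<Union>Q"] a X0 bQ by blast
  have "w \<in> V" using EV[OF xw(3)] by blast
  then obtain C where C: "C \<in> P" "w \<in> C" using up_cover[OF P] by blast
  have CQ: "C \<notin> Q" using C xw(2) by blast
  obtain X where X: "X \<in> Q" "x \<in> X" using xw(1) by blast
  have "X \<noteq> C" using X CQ by blast
  hence xC: "x \<notin> C" using up_disj[OF P, of X C] X IH(1) C by blast
  obtain s where s: "s \<in> C" and sp: "\<forall>B y. x \<in> B \<longrightarrow> s \<in> B \<longrightarrow> y \<in> B \<longrightarrow> E x y \<longrightarrow> (\<exists>B'. rch 2 2 B B' \<and> B \<union> C \<subseteq> B')"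
    using entry[OF P C xw(3) xC] by blast
  obtain y0 where y0: "y0 \<in> X" "E x y0" using two_in[OF P _ X(2)] X IH(1) by blast
  have sS: "S \<subseteq> insert s S" by blast
  obtain B1 where B1: "rch 2 2 (insert s S) B1" "B \<subseteq> B1" using rch_mono[OF IH(5) sS] by (elim exE conjE)
  have sB1: "s \<in> B1" using rch_incr[OF B1(1)] by blast
  have xB1: "x \<in> B1" "y0 \<in> B1" using X y0 IH(6) B1(2) by blast+
  have "\<exists>B'. rch 2 2 B1 B' \<and> B1 \<union> C \<subseteq> B'" using sp[rule_format, OF xB1(1) sB1 xB1(2) y0(2)] .
  then obtain B2 where B2: "rch 2 2 B1 B2" "B1 \<union> C \<subseteq> B2" by (elim exE conjE)
  have r: "rch 2 2 (insert s S) B2" using rch_add[OF B1(1) B2(1)] .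
  have q1: "insert C Q \<subseteq> P" using C IH(1) by blast
  have q2: "card (insert C Q) = Suc k" using CQ finQ IH(2) by simp
  have q3: "insert s S \<subseteq> V" using s C up_cover[OF P] IH(3) by blast
  have "finite S" using IH(3) finV by (rule finite_subset)
  hence q4: "card (insert s S) \<le> Suc k + 1" using IH(4) by (simp add: card_insert_if)
  have q5: "\<Union>(insert C Q) \<subseteq> B2" using IH(6) B1(2) B2(2) by blast
  show ?case by (intro exI[of _ "insert C Q"] exI[of _ "insert s S"] exI[of _ B2] conjI q1 q2 q3 q4 q5 r)
qed

lemma upper: "sigma V E 2 2 \<le> card Pc + 1"
proof -
  have P: "unit_partition V E Pc" by (rule Pc_part)
  have "V \<noteq> {}" using conn unfolding connected_graph_def by blast
  hence "Pc \<noteq> {}" using up_cover[OF P] by blast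
  hence "1 \<le> card Pc" using up_fin[OF P] by (simp add: Suc_leI card_gt_0_iff)
  then obtain Q S B where QSB: "Q \<subseteq> Pc" "card Q = card Pc" "S \<subseteq> V" "card S \<le> card Pc + 1" "rch 2 2 S B" "\<Union>Q \<subseteq> B"
    using grow[OF P \<open>1 \<le> card Pc\<close> order_refl] by (elim exE conjE) (rule that, assumption+)
  have "Q = Pc" using card_subset_eq[OF up_fin[OF P] QSB(1) QSB(2)] .
  hence "V \<subseteq> B" using QSB(6) up_cover[OF P] by blast
  moreover have "B \<subseteq> V" using rch_V[OF QSB(5) QSB(3)] .
  ultimately have "B = V" by blast
  hence "spreading_set V E 2 2 S" unfolding spreading_set_def using QSB(3,5) by simp
  thus ?thesis using sigma_le QSB(4) by (meson le_trans)
qed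

end



context cg begin

lemma rch_empty: "rch 2 q {} B \<Longrightarrow> B = {}"
proof (induction rule: rtranclp_induct)
  case base thus ?case by simp
next
  case (step B C)
  thus ?case unfolding spread_step_def by auto
qed

lemma sigma_pos: assumes "V \<noteq> {}" shows "1 \<le> sigma V E 2 q"
proof (rule sigma_ge)
  fix S assume S: "spreading_set V E 2 q S"
  have "S \<noteq> {}"
  proof
    assume "S = {}"
    hence "rch 2 q {} V" using S unfolding spreading_set_def by simp
    thus False using rch_empty assms by blast
  qed
  moreover have "finite S" using S finV unfolding spreading_set_def using finite_subset by blast
  ultimately show "1 \<le> card S" by (simp add: Suc_leI card_gt_0_iff)
qed

lemma K4_sigma: assumes K: "is_K4 V E" shows "sigma V E 2 2 \<le> 2"
proof -
  have c4: "card V = Suc 3" and adj: "\<forall>u\<in>V. \<forall>v\<in>V. u \<noteq> v \<longrightarrow> E u v" using K unfolding is_K4_def by auto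
  then obtain a V' where V': "V = insert a V'" "a \<notin> V'" "card V' = 3" unfolding card_Suc_eq by blast
  then obtain b c d where bcd: "V' = {b,c,d}" "b \<noteq> c" "c \<noteq> d" "b \<noteq> d" unfolding card_3_iff by blast
  have V: "V = {a,b,c,d}" using V' bcd by blast
  have ne: "a \<noteq> b" "a \<noteq> c" "a \<noteq> d" using V' bcd by auto
  have e: "E c a" "E c b" "E d a" "E d b" "E a b" using adj V ne bcd by auto
  have inV: "c \<in> V" "d \<in> V" using V by auto
  have r1: "rch 2 2 {a,b} (insert c {a,b})" by (rule add[of c a "{a,b}" b b]) (use e ne inV in auto)
  have r2: "rch 2 2 (insert c {a,b}) (insert d (insert c {a,b}))"
    by (rule add[of d a "insert c {a,b}" b b]) (use e ne inV in auto)
  have "insert d (insert c {a,b}) = V" using V by auto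
  hence "spreading_set V E 2 2 {a,b}" unfolding spreading_set_def using rtranclp_trans[OF r1 r2] V by auto
  hence "sigma V E 2 2 \<le> card {a,b}" by (rule sigma_le)
  also have "\<dots> \<le> 2" by (simp add: card_insert_le_m1)
  finally show ?thesis .
qed

end

theorem corollary4p8:
  fixes V :: "'a set" and E :: "'a \<Rightarrow> 'a \<Rightarrow> bool"
  assumes "simple_graph V E" and "connected_graph V E"
    and "claw_free V E" and "cubic V E"
  shows "(sigma V E 2 3 \<le> sigma V E 2 2 \<and> sigma V E 2 2 \<le> sigma V E 2 3 + 1) \<and>
         (\<not> is_K4 V E \<longrightarrow>
           num_units V E \<le> sigma V E 2 2 \<and> sigma V E 2 2 \<le> num_units V E + 1)"
proof -
  interpret cg V E using assms(1,4) by unfold_locales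
  have m: "sigma V E 2 3 \<le> sigma V E 2 2" by (rule sigma_mono)
  show ?thesis
  proof (cases "is_K4 V E")
    case True
    have "V \<noteq> {}" using assms(2) unfolding connected_graph_def by blast
    hence "1 \<le> sigma V E 2 3" by (rule sigma_pos)
    moreover have "sigma V E 2 2 \<le> 2" using K4_sigma[OF True] .
    ultimately show ?thesis using m True by linarith
  next
    case False
    interpret ccg V E using assms False by unfold_locales
    have P: "unit_partition V E Pc" by (rule Pc_part)
    have l2: "card Pc \<le> sigma V E 2 2" by (rule sigma_ge) (rule lower[OF P])
    have l3: "card Pc \<le> sigma V E 2 3" by (rule sigma_ge) (rule lower[OF P])
    have u: "sigma V E 2 2 \<le> card Pc + 1" by (rule upper)
    show ?thesis using l2 l3 u m num_units_eq False by linarith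
  qed
qed


end
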